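(* Let $X$ be a non-degenerate real-valued random variable with density $f_X$, CDF $F_X$, survival function $S_X=1-F_X$ and finite second moment. If $f_X$ is log-concave, then both $F_X$ and $S_X$ are log-concave; equivalently, the hazard rate $h_X=f_X/S_X$ is increasing and the reverse hazard rate $r_X=f_X/F_X$ is decreasing. Consequently $\mathrm{SD}[X]\le\mathrm{GMD}[X]$, where $\mathrm{SD}[X]=\sqrt{\tfrac12\mathbb{E}[(X-X')^2]}$ and $\mathrm{GMD}[X]=\mathbb{E}|X-X'|$ with $X'$ an independent copy of $X$.
   Context: Log-concavity and monotonicity are understood on the relevant support; monotonicity is non-strict. *)

theory Defs
  imports "HOL-Probability.Probability"
begin

text \<open>Log-concavity of a real function, understood on its support \<open>{x. g x > 0}\<close>:
  the support is convex and \<open>ln g\<close> is concave on it, i.e.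
  \<open>g (t x + (1-t) y) \<ge> g x ^ t * g y ^ (1-t)\<close> whenever \<open>g x, g y > 0\<close>, \<open>t \<in> [0,1]\<close>.\<close>
definition log_concave :: "(real \<Rightarrow> real) \<Rightarrow> bool" where
  "log_concave g \<longleftrightarrow>
     (\<forall>x y t. 0 < g x \<longrightarrow> 0 < g y \<longrightarrow> 0 \<le> t \<longrightarrow> t \<le> 1 \<longrightarrow>
        g x powr t * g y powr (1 - t) \<le> g (t * x + (1 - t) * y))"

end

theory Submission
  imports Defs
begin

locale lcd =
  fixes f :: "real \<Rightarrow> real"
  assumes f_nonneg: "\<And>x. 0 \<le> f x"
    and f_meas[measurable]: "f \<in> borel_measurable borel"
    and f_int: "integrable lborel f"
    and f_one: "(\<integral>x. f x \<partial>lborel) = 1"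
    and lc: "log_concave f"
begin

lemma tp2:
  assumes "x \<le> y" "0 \<le> u"
  shows "f (y+u) * f x \<le> f (x+u) * f y"
proof (cases "f x = 0 \<or> f (y+u) = 0 \<or> u = 0 \<or> x = y")
  case True
  then show ?thesis using f_nonneg[of "x+u"] f_nonneg[of y] by (auto simp: mult_nonneg_nonneg)
next
  case False
  then have fx: "0 < f x" and fy: "0 < f (y+u)" and xy: "x < y" and u: "0 < u"
    using f_nonneg[of x] f_nonneg[of "y+u"] assms by auto
  define t where "t = (y - x) / (y + u - x)"
  have L: "0 < y + u - x" using xy u by simp
  have t0: "0 \<le> t" "t \<le> 1" using xy u L by (auto simp: t_def field_simps)
  have tt: "t * (y + u - x) = y - x" using L by (simp add: t_def)
  have e1: "t * x + (1 - t) * (y + u) = x + u" using tt by (simp add: algebra_simps)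
  have e2: "(1 - t) * x + (1 - (1 - t)) * (y + u) = y" using tt by (simp add: algebra_simps)
  have a1: "f x powr t * f (y+u) powr (1 - t) \<le> f (x + u)"
    using lc fx fy t0 e1 unfolding log_concave_def by metis
  have a2: "f x powr (1 - t) * f (y+u) powr (1 - (1 - t)) \<le> f y"
    using lc[unfolded log_concave_def, rule_format, of x "y+u" "1-t"] fx fy t0 e2 by simp
  have "f (y+u) * f x = (f x powr t * f (y+u) powr (1 - t)) * (f x powr (1 - t) * f (y+u) powr (1 - (1 - t)))"
    using fx fy by (simp add: powr_add[symmetric] algebra_simps)
  also have "\<dots> \<le> f (x+u) * f y"
    by (intro mult_mono a1 a2) (auto simp: f_nonneg)
  finally show ?thesis .
qed

lemma shift_int:
  "(\<integral>z. g (z - e) * f z \<partial>lborel) = (\<integral>w. g w * f (w + e) \<partial>lborel)"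
  using lborel_integral_real_affine[of 1 "\<lambda>z. g (z - e) * f z" e] by (simp add: add.commute)

lemma integrable_shift_bounded:
  fixes g :: "real \<Rightarrow> real"
  assumes [measurable]: "g \<in> borel_measurable borel" and b: "\<And>z. \<bar>g z\<bar> \<le> B"
  shows "integrable lborel (\<lambda>w. g w * f (w + e))"
proof (rule Bochner_Integration.integrable_bound)
  have "integrable lborel (\<lambda>w. f (e + 1 * w))"
    by (rule lborel_integrable_real_affine[OF f_int]) simp
  then show "integrable lborel (\<lambda>w. B * f (w + e))"
    by (simp add: add.commute)
  show "AE x in lborel. norm (g x * f (x + e)) \<le> norm (B * f (x + e))"
    using b f_nonneg by (auto simp: abs_mult intro!: mult_right_mono order.trans[OF _ abs_ge_self])
qed simp

end

lemma integrable_prod_mult: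
  fixes g h :: "real \<Rightarrow> real"
  assumes g: "integrable lborel g" and h: "integrable lborel h"
  shows "integrable (lborel \<Otimes>\<^sub>M lborel) (\<lambda>p. g (fst p) * h (snd p))"
proof -
  have [measurable]: "g \<in> borel_measurable borel" "h \<in> borel_measurable borel"
    using g h by auto
  have "(\<integral>\<^sup>+p. ennreal (norm (g (fst p) * h (snd p))) \<partial>(lborel \<Otimes>\<^sub>M lborel))
      = (\<integral>\<^sup>+z. \<integral>\<^sup>+w. ennreal (norm (g z)) * ennreal (norm (h w)) \<partial>lborel \<partial>lborel)"
    by (subst lborel.nn_integral_fst[symmetric]) (auto simp: abs_mult ennreal_mult)
  also have "\<dots> = (\<integral>\<^sup>+z. ennreal (norm (g z)) \<partial>lborel) * (\<integral>\<^sup>+w. ennreal (norm (h w)) \<partial>lborel)"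
    by (simp add: nn_integral_cmult nn_integral_multc)
  also have "\<dots> < \<infinity>"
    using g h unfolding integrable_iff_bounded by (simp add: ennreal_mult_less_top)
  finally show ?thesis unfolding integrable_iff_bounded by simp
qed

context lcd begin

lemma composition:
  fixes K :: "real \<Rightarrow> real \<Rightarrow> real" and B :: real
  assumes Km[measurable]: "\<And>a. K a \<in> borel_measurable borel"
    and Kb: "\<And>a z. \<bar>K a z\<bar> \<le> B"
    and Ktp: "\<And>a1 a2 z1 z2. a1 \<le> a2 \<Longrightarrow> z1 \<le> z2 \<Longrightarrow> K a1 z2 * K a2 z1 \<le> K a1 z1 * K a2 z2"
    and a: "a1 \<le> a2" and e: "e1 \<le> e2"
  shows "(\<integral>z. K a1 (z - e1) * f z \<partial>lborel) * (\<integral>z. K a2 (z - e2) * f z \<partial>lborel)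
       \<le> (\<integral>z. K a1 (z - e2) * f z \<partial>lborel) * (\<integral>z. K a2 (z - e1) * f z \<partial>lborel)"
proof -
  define \<phi> where "\<phi> a e w = K a w * f (w + e)" for a e w
  have int: "integrable lborel (\<phi> a e)" for a e
    unfolding \<phi>_def by (rule integrable_shift_bounded[OF Km Kb])
  define P where "P p = \<phi> a1 e1 (fst p) * \<phi> a2 e2 (snd p)" for p
  define Q where "Q p = \<phi> a1 e2 (fst p) * \<phi> a2 e1 (snd p)" for p
  have iP: "integrable (lborel \<Otimes>\<^sub>M lborel) P" unfolding P_def by (intro integrable_prod_mult int)
  have iQ: "integrable (lborel \<Otimes>\<^sub>M lborel) Q" unfolding Q_def by (intro integrable_prod_mult int)
  have prodint: "(\<integral>z. \<phi> a e z \<partial>lborel) * (\<integral>z. \<phi> a' e' z \<partial>lborel)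
      = (\<integral>p. \<phi> a e (fst p) * \<phi> a' e' (snd p) \<partial>(lborel \<Otimes>\<^sub>M lborel))" for a e a' e'
  proof -
    have "(\<integral>z. \<phi> a e z \<partial>lborel) * (\<integral>z. \<phi> a' e' z \<partial>lborel)
        = (\<integral>z. (\<integral>w. \<phi> a e z * \<phi> a' e' w \<partial>lborel) \<partial>lborel)"
      by (simp only: integral_mult_right_zero integral_mult_left_zero)
    also have "\<dots> = (\<integral>p. \<phi> a e (fst p) * \<phi> a' e' (snd p) \<partial>(lborel \<Otimes>\<^sub>M lborel))"
      using lborel_pair.integral_fst'[OF integrable_prod_mult[OF int int, of a e a' e']] by simp
    finally show ?thesis .
  qed
  have eqs: "(\<integral>z. K a (z - e) * f z \<partial>lborel) = (\<integral>z. \<phi> a e z \<partial>lborel)" for a e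
    unfolding \<phi>_def by (rule shift_int)
  have swap: "(\<integral>p. R (snd p, fst p) \<partial>(lborel \<Otimes>\<^sub>M lborel)) = (\<integral>p. R p \<partial>(lborel \<Otimes>\<^sub>M lborel))"
    if "integrable (lborel \<Otimes>\<^sub>M lborel) R" for R :: "real \<times> real \<Rightarrow> real"
    using lborel_pair.integral_product_swap[of R] that by (simp add: case_prod_beta')
  have pw: "0 \<le> (Q p - P p) + (Q (snd p, fst p) - P (snd p, fst p))" for p
  proof -
    obtain z w where p: "p = (z, w)" by (cases p)
    have eq: "(Q p - P p) + (Q (snd p, fst p) - P (snd p, fst p))
       = (K a1 z * K a2 w - K a1 w * K a2 z) * (f (z + e2) * f (w + e1) - f (z + e1) * f (w + e2))"
      unfolding p P_def Q_def \<phi>_def fst_conv snd_conv by algebra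
    show ?thesis
    proof (cases "z \<le> w")
      case True
      have 1: "0 \<le> K a1 z * K a2 w - K a1 w * K a2 z" using Ktp[OF a True] by simp
      have 2: "0 \<le> f (z + e2) * f (w + e1) - f (z + e1) * f (w + e2)"
        using tp2[of "z + e1" "w + e1" "e2 - e1"] True e by (simp add: algebra_simps)
      show ?thesis unfolding eq using 1 2 by simp
    next
      case False
      then have wz: "w \<le> z" by simp
      have 1: "K a1 z * K a2 w - K a1 w * K a2 z \<le> 0" using Ktp[OF a wz] by simp
      have 2: "f (z + e2) * f (w + e1) - f (z + e1) * f (w + e2) \<le> 0"
        using tp2[of "w + e1" "z + e1" "e2 - e1"] wz e by (simp add: algebra_simps)
      show ?thesis unfolding eq using 1 2 by (simp add: mult_nonpos_nonpos)
    qed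
  qed
  have iD: "integrable (lborel \<Otimes>\<^sub>M lborel) (\<lambda>p. Q p - P p)" using iP iQ by simp
  have iDs: "integrable (lborel \<Otimes>\<^sub>M lborel) (\<lambda>p. Q (snd p, fst p) - P (snd p, fst p))"
    using lborel_pair.integrable_product_swap[OF iD] by (simp add: case_prod_beta')
  have "0 \<le> (\<integral>p. (Q p - P p) + (Q (snd p, fst p) - P (snd p, fst p)) \<partial>(lborel \<Otimes>\<^sub>M lborel))"
    by (intro integral_nonneg_AE) (simp add: pw)
  also have "\<dots> = (\<integral>p. Q p - P p \<partial>(lborel \<Otimes>\<^sub>M lborel)) + (\<integral>p. Q (snd p, fst p) - P (snd p, fst p) \<partial>(lborel \<Otimes>\<^sub>M lborel))"
    using iD iDs by simp
  also have "\<dots> = 2 * (\<integral>p. Q p - P p \<partial>(lborel \<Otimes>\<^sub>M lborel))"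
    using swap[OF iD] by simp
  finally have "0 \<le> (\<integral>p. Q p - P p \<partial>(lborel \<Otimes>\<^sub>M lborel))" by simp
  then have "(\<integral>p. P p \<partial>(lborel \<Otimes>\<^sub>M lborel)) \<le> (\<integral>p. Q p \<partial>(lborel \<Otimes>\<^sub>M lborel))"
    using iP iQ by simp
  then show ?thesis unfolding eqs prodint P_def Q_def .
qed

end

lemma lc_core:
  fixes g :: "real \<Rightarrow> real"
  assumes cont: "\<And>x. isCont g x" and nn: "\<And>x. 0 \<le> g x"
    and inc: "\<And>x y d. x \<le> y \<Longrightarrow> 0 \<le> d \<Longrightarrow> g x * g (y + d) \<le> g (x + d) * g y"
    and xy: "x < y" and gx: "0 < g x" and gy: "0 < g y"
  shows "\<forall>z\<in>{x..y}. 0 < g z \<and> ln (g x) + (z - x) / (y - x) * (ln (g y) - ln (g x)) \<le> ln (g z)"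
proof -
  have pos: "0 < g z" if "z \<in> {x..y}" for z
  proof -
    have "g x * g y \<le> g (x + (y - z)) * g z" using inc[of x z "y - z"] that by auto
    moreover have "0 < g x * g y" using gx gy by simp
    ultimately have "0 < g (x + (y - z)) * g z" by linarith
    then show ?thesis using nn[of z] by (cases "g z = 0") auto
  qed
  define L where "L z = ln (g x) + (z - x) * ((ln (g y) - ln (g x)) / (y - x))" for z
  define \<psi> where "\<psi> z = ln (g z) - L z" for z
  have cg: "continuous_on {x..y} g" using cont by (simp add: continuous_at_imp_continuous_on)
  have cl: "continuous_on {x..y} (\<lambda>z. ln (g z))"
    by (rule continuous_on_ln[OF cg]) (use pos in force)
  have contpsi: "continuous_on {x..y} \<psi>"
    unfolding \<psi>_def L_def by (intro continuous_intros cl) (use xy in auto)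
  have Lmid: "L (z - d) + L (z + d) = 2 * L z" for z d
  proof -
    have aux: "(a + (z - d - x) * c) + (a + (z + d - x) * c) = 2 * (a + (z - x) * c)" for a c :: real
      by algebra
    show ?thesis unfolding L_def by (rule aux)
  qed
  have psimid: "\<psi> (z - d) + \<psi> (z + d) \<le> 2 * \<psi> z" if "z - d \<in> {x..y}" "z + d \<in> {x..y}" "0 \<le> d" for z d
  proof -
    have "g (z - d) * g (z - d + d + d) \<le> g (z - d + d) * g (z - d + d)"
      using inc[of "z - d" "z - d + d" d] that by simp
    then have ineq: "g (z - d) * g (z + d) \<le> g z * g z" by simp
    have zin: "z \<in> {x..y}" using that by auto
    have p1: "0 < g (z - d)" and p2: "0 < g (z + d)" and p3: "0 < g z"
      using pos that zin by blast+
    have "ln (g (z - d)) + ln (g (z + d)) = ln (g (z - d) * g (z + d))" using p1 p2 by (simp add: ln_mult)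
    also have "\<dots> \<le> ln (g z * g z)" using ineq p1 p2 p3 by simp
    also have "\<dots> = 2 * ln (g z)" using p3 by (simp add: ln_mult)
    finally show ?thesis unfolding \<psi>_def using Lmid[of z d] by simp
  qed
  have "\<psi> z \<ge> 0" if z: "z \<in> {x..y}" for z
  proof (rule ccontr)
    assume neg: "\<not> 0 \<le> \<psi> z"
    obtain z1 where z1: "z1 \<in> {x..y}" "\<And>w. w \<in> {x..y} \<Longrightarrow> \<psi> z1 \<le> \<psi> w"
      using continuous_attains_inf[OF compact_Icc _ contpsi] xy by fastforce
    define m where "m = \<psi> z1"
    have m0: "m < 0" using z1(2)[OF z] neg m_def by simp
    define C where "C = {w \<in> {x..y}. \<psi> w = m}"
    have clC: "closed C" unfolding C_def
      by (rule continuous_closed_preimage_constant[OF contpsi closed_atLeastAtMost])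
    have neC: "C \<noteq> {}" using z1 m_def C_def by auto
    have bC: "bdd_below C" unfolding C_def by (auto intro: bdd_belowI[of _ x])
    define z0 where "z0 = Inf C"
    have z0C: "z0 \<in> C" unfolding z0_def by (rule closed_contains_Inf[OF neC bC clC])
    have psix: "\<psi> x = 0" "\<psi> y = 0" unfolding \<psi>_def L_def using xy by auto
    have z0in: "x < z0" "z0 < y"
      using z0C psix m0 unfolding C_def by (auto simp: order_le_less)
    define d where "d = min (z0 - x) (y - z0)"
    have d0: "0 < d" using z0in by (simp add: d_def)
    have in1: "z0 - d \<in> {x..y}" "z0 + d \<in> {x..y}" using z0in by (auto simp: d_def)
    have "z0 - d \<notin> C"
    proof
      assume "z0 - d \<in> C"
      then have "z0 \<le> z0 - d" unfolding z0_def using bC by (rule cInf_lower)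
      then show False using d0 by simp
    qed
    then have g1: "m < \<psi> (z0 - d)" using z1(2)[OF in1(1)] in1(1) unfolding C_def m_def by auto
    have g2: "m \<le> \<psi> (z0 + d)" using z1(2)[OF in1(2)] unfolding m_def .
    have "\<psi> z0 = m" using z0C C_def by auto
    then show False using psimid[OF in1 less_imp_le[OF d0]] g1 g2 by simp
  qed
  then show ?thesis using pos unfolding \<psi>_def L_def by auto
qed

lemma lc_of_incr:
  fixes g :: "real \<Rightarrow> real"
  assumes cont: "\<And>x. isCont g x" and nn: "\<And>x. 0 \<le> g x"
    and inc: "\<And>x y d. x \<le> y \<Longrightarrow> 0 \<le> d \<Longrightarrow> g x * g (y + d) \<le> g (x + d) * g y"
  shows "log_concave g"
  unfolding log_concave_def
proof (intro allI impI)
  have main: "g x powr t * g y powr (1 - t) \<le> g (t * x + (1 - t) * y)"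
    if xy: "x < y" and gx: "0 < g x" and gy: "0 < g y" and t: "0 \<le> t" "t \<le> 1" for x y t
  proof -
    define z where "z = t * x + (1 - t) * y"
    have e1: "z - x = (1 - t) * (y - x)" unfolding z_def by algebra
    have e2: "y - z = t * (y - x)" unfolding z_def by algebra
    have "0 \<le> (1 - t) * (y - x)" "0 \<le> t * (y - x)" using xy t by simp_all
    then have zin: "z \<in> {x..y}" using e1 e2 unfolding atLeastAtMost_iff by linarith
    have ne: "y - x \<noteq> 0" using xy by simp
    have zx: "(z - x) / (y - x) = 1 - t" unfolding e1 using ne by simp
    have gz: "0 < g z" and l0: "ln (g x) + (z - x) / (y - x) * (ln (g y) - ln (g x)) \<le> ln (g z)"
      using bspec[OF lc_core[OF cont nn inc xy gx gy] zin] by auto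
    from l0 have l1: "ln (g x) + (1 - t) * (ln (g y) - ln (g x)) \<le> ln (g z)" by (simp only: zx)
    have "ln (g x) + (1 - t) * (ln (g y) - ln (g x)) = t * ln (g x) + (1 - t) * ln (g y)" by algebra
    then have "t * ln (g x) + (1 - t) * ln (g y) \<le> ln (g z)" using l1 by linarith
    then have "exp (t * ln (g x) + (1 - t) * ln (g y)) \<le> g z" using gz
      by (metis exp_le_cancel_iff exp_ln)
    moreover have "g x powr t * g y powr (1 - t) = exp (t * ln (g x) + (1 - t) * ln (g y))"
      using gx gy by (simp add: powr_def exp_add mult.commute)
    ultimately show ?thesis unfolding z_def by simp
  qed
  fix x y t :: real
  assume gx: "0 < g x" and gy: "0 < g y" and t: "0 \<le> t" "t \<le> 1"
  consider "x < y" | "x = y" | "y < x" by linarith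
  then show "g x powr t * g y powr (1 - t) \<le> g (t * x + (1 - t) * y)"
  proof cases
    case 1 then show ?thesis using main gx gy t by blast
  next
    case 2 then show ?thesis using gx by (simp add: powr_add[symmetric] algebra_simps)
  next
    case 3
    have "g y powr (1 - t) * g x powr (1 - (1 - t)) \<le> g ((1 - t) * y + (1 - (1 - t)) * x)"
      using main[OF 3 gy gx, of "1 - t"] t by simp
    then show ?thesis by (simp add: mult.commute add.commute)
  qed
qed

context lcd begin

definition Fc :: "real \<Rightarrow> real" where "Fc x = (\<integral>y. indicator {..x} y * f y \<partial>lborel)"
definition Sc :: "real \<Rightarrow> real" where "Sc x = (\<integral>y. indicator {x<..} y * f y \<partial>lborel)"
definition G :: "real \<Rightarrow> real" where "G c = (\<integral>z. Fc (z - c) * f z \<partial>lborel)"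

lemma int_ind: "integrable lborel (\<lambda>y. indicator A y * f y)" if "A \<in> sets borel"
  using integrable_mult_indicator[of A lborel f] that f_int by (simp add: mult.commute)

lemma Fc_nonneg: "0 \<le> Fc x"
  unfolding Fc_def by (intro integral_nonneg_AE) (auto simp: f_nonneg)

lemma Fc_mono: "x \<le> y \<Longrightarrow> Fc x \<le> Fc y"
  unfolding Fc_def by (intro integral_mono int_ind) (auto simp: f_nonneg split: split_indicator)

lemma Fc_le1: "Fc x \<le> 1"
proof -
  have "Fc x \<le> (\<integral>y. f y \<partial>lborel)"
    unfolding Fc_def by (intro integral_mono int_ind f_int) (auto simp: f_nonneg split: split_indicator)
  then show ?thesis using f_one by simp
qed

lemma Fc_meas[measurable]: "Fc \<in> borel_measurable borel"
  by (rule borel_measurable_mono) (auto simp: mono_def Fc_mono)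

lemma Fc_Sc: "Sc x = 1 - Fc x"
proof -
  have "Fc x + Sc x = (\<integral>y. indicator {..x} y * f y + indicator {x<..} y * f y \<partial>lborel)"
    unfolding Fc_def Sc_def by (intro Bochner_Integration.integral_add[symmetric] int_ind) auto
  also have "\<dots> = (\<integral>y. f y \<partial>lborel)"
    by (intro Bochner_Integration.integral_cong) (auto split: split_indicator)
  finally show ?thesis using f_one by simp
qed

lemma ind_shift1: "indicator {..a::real} (z - e) = (indicator {..a+e} z :: real)"
  by (auto split: split_indicator)
lemma ind_shift2: "indicator {a::real<..} (z - e) = (indicator {a+e<..} z :: real)"
  by (auto split: split_indicator)

lemma Fc_incr:
  assumes "x \<le> y" "0 \<le> d"
  shows "Fc x * Fc (y + d) \<le> Fc (x + d) * Fc y"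
  using composition[of "\<lambda>a z. indicator {..a} z" 1 x y 0 d] assms
  unfolding Fc_def ind_shift1
  by (auto split: split_indicator)

lemma Sc_incr:
  assumes "x \<le> y" "0 \<le> d"
  shows "Sc x * Sc (y + d) \<le> Sc (x + d) * Sc y"
  using composition[of "\<lambda>a z. indicator {a<..} z" 1 x y 0 d] assms
  unfolding Sc_def ind_shift2
  by (auto split: split_indicator)

lemma G_nbu:
  assumes "0 \<le> a" "0 \<le> b"
  shows "G 0 * G (a + b) \<le> G a * G b"
proof -
  have Ktp: "Fc (z2 - a1) * Fc (z1 - a2) \<le> Fc (z1 - a1) * Fc (z2 - a2)"
    if "a1 \<le> a2" "z1 \<le> z2" for a1 a2 z1 z2
    using Fc_incr[of "z1 - a2" "z2 - a2" "a2 - a1"] that by (simp add: mult.commute)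
  have "\<bar>Fc z\<bar> \<le> 1" for z using Fc_nonneg Fc_le1 by simp
  then have "(\<integral>z. Fc (z - 0 - 0) * f z \<partial>lborel) * (\<integral>z. Fc (z - b - a) * f z \<partial>lborel)
       \<le> (\<integral>z. Fc (z - b - 0) * f z \<partial>lborel) * (\<integral>z. Fc (z - 0 - a) * f z \<partial>lborel)"
    using composition[of "\<lambda>a z. Fc (z - a)" 1 0 a 0 b] Ktp assms by auto
  then show ?thesis unfolding G_def by (simp add: diff_diff_eq add.commute mult.commute)
qed

lemma h_mono:
  assumes "x \<le> y"
  shows "f x * Sc y \<le> f y * Sc x"
proof -
  define d where "d = y - x"
  have "Sc x = (\<integral>z. indicator {y<..} (z - (-d)) * f z \<partial>lborel)"
    unfolding Sc_def d_def by (intro Bochner_Integration.integral_cong) (auto split: split_indicator)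
  also have "\<dots> = (\<integral>w. indicator {y<..} w * f (w + (-d)) \<partial>lborel)" by (rule shift_int)
  finally have Sx: "Sc x = (\<integral>w. indicator {y<..} w * f (w - d) \<partial>lborel)" by simp
  have i1: "integrable lborel (\<lambda>w. indicator {y<..} w * f (w - d))"
    using integrable_shift_bounded[of "indicator {y<..}" 1 "-d"] by simp
  have "f x * Sc y = (\<integral>w. f x * (indicator {y<..} w * f w) \<partial>lborel)"
    unfolding Sc_def by simp
  also have "\<dots> \<le> (\<integral>w. f y * (indicator {y<..} w * f (w - d)) \<partial>lborel)"
  proof (intro integral_mono)
    show "integrable lborel (\<lambda>w. f x * (indicator {y<..} w * f w))" using int_ind by simp
    show "integrable lborel (\<lambda>w. f y * (indicator {y<..} w * f (w - d)))" using i1 by simp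
    fix w
    show "f x * (indicator {y<..} w * f w) \<le> f y * (indicator {y<..} w * f (w - d))"
    proof (cases "y < w")
      case True
      then show ?thesis using tp2[of x "w - d" d] assms by (simp add: d_def mult.commute)
    qed simp
  qed
  also have "\<dots> = f y * Sc x" unfolding Sx by simp
  finally show ?thesis .
qed

lemma r_anti:
  assumes "x \<le> y"
  shows "f y * Fc x \<le> f x * Fc y"
proof -
  define d where "d = y - x"
  have "Fc y = (\<integral>z. indicator {..x} (z - d) * f z \<partial>lborel)"
    unfolding Fc_def d_def by (intro Bochner_Integration.integral_cong) (auto split: split_indicator)
  also have "\<dots> = (\<integral>w. indicator {..x} w * f (w + d) \<partial>lborel)" by (rule shift_int)
  finally have Fy: "Fc y = (\<integral>w. indicator {..x} w * f (w + d) \<partial>lborel)" .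
  have i1: "integrable lborel (\<lambda>w. indicator {..x} w * f (w + d))"
    using integrable_shift_bounded[of "indicator {..x}" 1 d] by simp
  have "f y * Fc x = (\<integral>w. f y * (indicator {..x} w * f w) \<partial>lborel)"
    unfolding Fc_def by simp
  also have "\<dots> \<le> (\<integral>w. f x * (indicator {..x} w * f (w + d)) \<partial>lborel)"
  proof (intro integral_mono)
    show "integrable lborel (\<lambda>w. f y * (indicator {..x} w * f w))" using int_ind by simp
    show "integrable lborel (\<lambda>w. f x * (indicator {..x} w * f (w + d)))" using i1 by simp
    fix w
    show "f y * (indicator {..x} w * f w) \<le> f x * (indicator {..x} w * f (w + d))"
    proof (cases "w \<le> x")
      case True
      then show ?thesis using tp2[of w x d] assms by (simp add: d_def mult.commute)
    qed simp
  qed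
  also have "\<dots> = f x * Fc y" unfolding Fy by simp
  finally show ?thesis .
qed

end

lemma measurable_ind_atMost_enn[measurable (raw)]:
  fixes g h :: "'a \<Rightarrow> real"
  assumes [measurable]: "g \<in> borel_measurable M" "h \<in> borel_measurable M"
  shows "(\<lambda>p. indicator {..g p} (h p) :: ennreal) \<in> borel_measurable M"
proof -
  have "(\<lambda>p. indicator {..g p} (h p) :: ennreal) = (\<lambda>p. if h p \<le> g p then 1 else 0)"
    by (auto simp: indicator_def fun_eq_iff)
  then show ?thesis by (simp only:) measurable
qed

context lcd begin

lemma ennreal_ind_int:
  assumes "A \<in> sets borel"
  shows "ennreal (\<integral>y. indicator A y * f y \<partial>lborel) = (\<integral>\<^sup>+y. ennreal (f y) * indicator A y \<partial>lborel)"
proof -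
  have "ennreal (\<integral>y. indicator A y * f y \<partial>lborel) = (\<integral>\<^sup>+y. ennreal (indicator A y * f y) \<partial>lborel)"
    by (rule nn_integral_eq_integral[symmetric]) (auto simp: int_ind assms f_nonneg)
  also have "\<dots> = (\<integral>\<^sup>+y. ennreal (f y) * indicator A y \<partial>lborel)"
    by (intro nn_integral_cong) (auto split: split_indicator)
  finally show ?thesis .
qed

lemma nn_f_one: "(\<integral>\<^sup>+y. ennreal (f y) \<partial>lborel) = 1"
  using ennreal_ind_int[of UNIV] f_one by simp

lemma measure_N: "A \<in> sets borel \<Longrightarrow> measure (density lborel f) A = (\<integral>y. indicator A y * f y \<partial>lborel)"
proof -
  assume A: "A \<in> sets borel"
  have "0 \<le> (\<integral>y. indicator A y * f y \<partial>lborel)"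
    by (intro integral_nonneg_AE) (auto simp: f_nonneg)
  then show ?thesis unfolding measure_def using A
    by (subst emeasure_density) (auto simp: ennreal_ind_int[symmetric])
qed

lemma Fc_cont: "isCont Fc x"
proof -
  have e1: "emeasure (density lborel f) UNIV = 1"
    by (subst emeasure_density) (auto simp: nn_f_one)
  have fin: "finite_measure (density lborel f)"
    by (rule finite_measureI) (simp add: e1)
  have ax: "finite_borel_measure_axioms (density lborel f)"
    by (rule finite_borel_measure_axioms.intro) simp
  have fbm: "finite_borel_measure (density lborel f)"
    by (rule finite_borel_measure.intro[OF fin ax])
  have eq: "Fc = cdf (density lborel f)"
  proof
    fix y show "Fc y = cdf (density lborel f) y"
      unfolding cdf_def2 Fc_def by (rule measure_N[symmetric]) simp
  qed
  have "(\<integral>y. indicator {x} y * f y \<partial>lborel) = 0"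
    by (intro integral_eq_zero_AE) (rule AE_mp[OF AE_lborel_singleton[of x]], simp)
  then have "measure (density lborel f) {x} = 0"
    by (subst measure_N) simp_all
  then show ?thesis unfolding eq using finite_borel_measure.isCont_cdf[OF fbm] by simp
qed

lemma Sc_nonneg: "0 \<le> Sc x"
  unfolding Sc_def by (intro integral_nonneg_AE) (auto simp: f_nonneg)

lemma Fc_lc: "log_concave Fc"
  by (rule lc_of_incr[OF Fc_cont Fc_nonneg Fc_incr])

lemma Sc_lc: "log_concave Sc"
proof (rule lc_of_incr[OF _ Sc_nonneg Sc_incr])
  fix x show "isCont Sc x" unfolding Fc_Sc[abs_def] using Fc_cont by (intro continuous_intros)
qed

definition Gn :: "real \<Rightarrow> ennreal" where
  "Gn a = (\<integral>\<^sup>+z. \<integral>\<^sup>+y. ennreal (f z) * ennreal (f y) * indicator {..z - a} y \<partial>lborel \<partial>lborel)"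

lemma G_nonneg: "0 \<le> G a"
  unfolding G_def by (intro integral_nonneg_AE) (auto simp: f_nonneg Fc_nonneg)

lemma G_Gn: "ennreal (G a) = Gn a"
proof -
  have b: "\<bar>Fc z\<bar> \<le> 1" for z using Fc_nonneg Fc_le1 by simp
  have "ennreal (G a) = (\<integral>\<^sup>+z. ennreal (Fc (z - a) * f z) \<partial>lborel)"
    unfolding G_def
    by (rule nn_integral_eq_integral[symmetric])
       (use integrable_shift_bounded[of "\<lambda>z. Fc (z - a)" 1 0] b in \<open>auto simp: f_nonneg Fc_nonneg\<close>)
  also have "\<dots> = (\<integral>\<^sup>+z. ennreal (f z) * ennreal (Fc (z - a)) \<partial>lborel)"
    by (intro nn_integral_cong) (simp add: ennreal_mult f_nonneg Fc_nonneg mult.commute)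
  also have "\<dots> = (\<integral>\<^sup>+z. ennreal (f z) * (\<integral>\<^sup>+y. ennreal (f y) * indicator {..z - a} y \<partial>lborel) \<partial>lborel)"
    unfolding Fc_def by (subst ennreal_ind_int) auto
  also have "\<dots> = Gn a"
    unfolding Gn_def by (intro nn_integral_cong) (simp add: nn_integral_cmult[symmetric] mult.assoc)
  finally show ?thesis .
qed

lemma G0: "1 \<le> 2 * G 0"
proof -
  define k where "k z y = ennreal (f z) * ennreal (f y)" for z y
  have Gn0: "Gn 0 = (\<integral>\<^sup>+z. \<integral>\<^sup>+y. k z y * indicator {..z} y \<partial>lborel \<partial>lborel)"
    unfolding Gn_def k_def by simp
  have "(\<integral>\<^sup>+z. \<integral>\<^sup>+y. k z y * indicator {..z} y \<partial>lborel \<partial>lborel)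
      = (\<integral>\<^sup>+y. \<integral>\<^sup>+z. k z y * indicator {..z} y \<partial>lborel \<partial>lborel)"
    by (rule lborel_pair.Fubini'[symmetric]) (simp add: k_def)
  also have "\<dots> = (\<integral>\<^sup>+z. \<integral>\<^sup>+y. k z y * indicator {..y} z \<partial>lborel \<partial>lborel)"
    by (simp add: k_def mult.commute)
  finally have sw: "Gn 0 = (\<integral>\<^sup>+z. \<integral>\<^sup>+y. k z y * indicator {..y} z \<partial>lborel \<partial>lborel)" using Gn0 by simp
  have "1 = (\<integral>\<^sup>+z. ennreal (f z) \<partial>lborel) * (\<integral>\<^sup>+y. ennreal (f y) \<partial>lborel)" using nn_f_one by simp
  also have "\<dots> = (\<integral>\<^sup>+z. \<integral>\<^sup>+y. k z y \<partial>lborel \<partial>lborel)"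
    unfolding k_def by (simp add: nn_integral_cmult nn_integral_multc)
  also have "\<dots> \<le> (\<integral>\<^sup>+z. \<integral>\<^sup>+y. k z y * indicator {..z} y + k z y * indicator {..y} z \<partial>lborel \<partial>lborel)"
    by (intro nn_integral_mono) (auto split: split_indicator)
  also have "\<dots> = (\<integral>\<^sup>+z. (\<integral>\<^sup>+y. k z y * indicator {..z} y \<partial>lborel) + (\<integral>\<^sup>+y. k z y * indicator {..y} z \<partial>lborel) \<partial>lborel)"
    by (intro nn_integral_cong nn_integral_add) (auto simp: k_def)
  also have "\<dots> = (\<integral>\<^sup>+z. \<integral>\<^sup>+y. k z y * indicator {..z} y \<partial>lborel \<partial>lborel) + (\<integral>\<^sup>+z. \<integral>\<^sup>+y. k z y * indicator {..y} z \<partial>lborel \<partial>lborel)"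
    by (rule nn_integral_add) (auto simp: k_def)
  also have "\<dots> = Gn 0 + Gn 0"
    using Gn0 sw by metis
  finally have "1 \<le> 2 * Gn 0" by (simp add: mult_2)
  moreover have "ennreal (2 * G 0) = 2 * Gn 0"
    using G_nonneg[of 0] by (simp add: ennreal_mult G_Gn[symmetric])
  ultimately have "ennreal 1 \<le> ennreal (2 * G 0)" by simp
  then show ?thesis using G_nonneg[of 0] by (subst (asm) ennreal_le_iff) auto
qed

end

context lcd begin

lemma layer:
  fixes \<phi> :: "real \<Rightarrow> ennreal" and s :: real
  assumes [measurable]: "\<phi> \<in> borel_measurable borel"
  shows "(\<integral>\<^sup>+b. \<phi> b * Gn (s + b) \<partial>lborel)
       = (\<integral>\<^sup>+z. \<integral>\<^sup>+y. ennreal (f z) * ennreal (f y) * (\<integral>\<^sup>+b. \<phi> b * indicator {..z - (s + b)} y \<partial>lborel) \<partial>lborel \<partial>lborel)"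
proof -
  define F where "F b z y = \<phi> b * (ennreal (f z) * ennreal (f y) * indicator {..z - (s + b)} y)" for b z y
  have [measurable]: "(\<lambda>(b, z, y). F b z y) \<in> borel_measurable (lborel \<Otimes>\<^sub>M (lborel \<Otimes>\<^sub>M lborel))"
    unfolding F_def by measurable
  have "(\<integral>\<^sup>+b. \<phi> b * Gn (s + b) \<partial>lborel) = (\<integral>\<^sup>+b. \<integral>\<^sup>+z. \<integral>\<^sup>+y. F b z y \<partial>lborel \<partial>lborel \<partial>lborel)"
    unfolding Gn_def F_def by (simp add: nn_integral_cmult[symmetric])
  also have "\<dots> = (\<integral>\<^sup>+z. \<integral>\<^sup>+b. \<integral>\<^sup>+y. F b z y \<partial>lborel \<partial>lborel \<partial>lborel)"
    by (rule lborel_pair.Fubini'[of "\<lambda>z b. \<integral>\<^sup>+y. F b z y \<partial>lborel"]) (unfold F_def, measurable)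
  also have "\<dots> = (\<integral>\<^sup>+z. \<integral>\<^sup>+y. \<integral>\<^sup>+b. F b z y \<partial>lborel \<partial>lborel \<partial>lborel)"
    by (intro nn_integral_cong lborel_pair.Fubini'[of "\<lambda>y b. F b _ y"]) (unfold F_def, measurable)
  also have "\<dots> = (\<integral>\<^sup>+z. \<integral>\<^sup>+y. ennreal (f z) * ennreal (f y) * (\<integral>\<^sup>+b. \<phi> b * indicator {..z - (s + b)} y \<partial>lborel) \<partial>lborel \<partial>lborel)"
    unfolding F_def by (intro nn_integral_cong) (simp add: nn_integral_cmult[symmetric] mult_ac)
  finally show ?thesis .
qed

lemma swap3:
  fixes \<phi> ch :: "real \<Rightarrow> ennreal"
  assumes [measurable]: "\<phi> \<in> borel_measurable borel" "ch \<in> borel_measurable borel"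
  shows "(\<integral>\<^sup>+a. \<phi> a * (\<integral>\<^sup>+z. \<integral>\<^sup>+y. ennreal (f z) * ennreal (f y) * ch (z - y - a) \<partial>lborel \<partial>lborel) \<partial>lborel)
       = (\<integral>\<^sup>+z. \<integral>\<^sup>+y. ennreal (f z) * ennreal (f y) * (\<integral>\<^sup>+a. \<phi> a * ch (z - y - a) \<partial>lborel) \<partial>lborel \<partial>lborel)"
proof -
  define F where "F b z y = \<phi> b * (ennreal (f z) * ennreal (f y) * ch (z - y - b))" for b z y
  have "(\<integral>\<^sup>+a. \<phi> a * (\<integral>\<^sup>+z. \<integral>\<^sup>+y. ennreal (f z) * ennreal (f y) * ch (z - y - a) \<partial>lborel \<partial>lborel) \<partial>lborel)
      = (\<integral>\<^sup>+b. \<integral>\<^sup>+z. \<integral>\<^sup>+y. F b z y \<partial>lborel \<partial>lborel \<partial>lborel)"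
    unfolding F_def by (simp add: nn_integral_cmult[symmetric])
  also have "\<dots> = (\<integral>\<^sup>+z. \<integral>\<^sup>+b. \<integral>\<^sup>+y. F b z y \<partial>lborel \<partial>lborel \<partial>lborel)"
    by (rule lborel_pair.Fubini'[of "\<lambda>z b. \<integral>\<^sup>+y. F b z y \<partial>lborel"]) (unfold F_def, measurable)
  also have "\<dots> = (\<integral>\<^sup>+z. \<integral>\<^sup>+y. \<integral>\<^sup>+b. F b z y \<partial>lborel \<partial>lborel \<partial>lborel)"
    by (intro nn_integral_cong lborel_pair.Fubini'[of "\<lambda>y b. F b _ y"]) (unfold F_def, measurable)
  also have "\<dots> = (\<integral>\<^sup>+z. \<integral>\<^sup>+y. ennreal (f z) * ennreal (f y) * (\<integral>\<^sup>+a. \<phi> a * ch (z - y - a) \<partial>lborel) \<partial>lborel \<partial>lborel)"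
    unfolding F_def by (intro nn_integral_cong) (simp add: nn_integral_cmult[symmetric] mult_ac)
  finally show ?thesis .
qed

lemma inner1: "(\<integral>\<^sup>+b. indicator {0..} b * indicator {..z - (s + b)} y \<partial>lborel) = ennreal (max 0 (z - y - s))"
proof -
  have "(\<integral>\<^sup>+b. indicator {0..} b * indicator {..z - (s + b)} y \<partial>lborel) = (\<integral>\<^sup>+b. indicator {0..z - y - s} b \<partial>lborel)"
    by (intro nn_integral_cong) (auto split: split_indicator)
  also have "\<dots> = ennreal (max 0 (z - y - s))"
    by (cases "0 \<le> z - y - s") auto
  finally show ?thesis .
qed

lemma tri: "(\<integral>\<^sup>+a. indicator {0..} a * ennreal (max 0 (c - a)) \<partial>lborel) = ennreal ((max 0 c)\<^sup>2 / 2)"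
proof (cases "0 \<le> c")
  case True
  have "(\<integral>\<^sup>+a. indicator {0..} a * ennreal (max 0 (c - a)) \<partial>lborel) = (\<integral>\<^sup>+a. ennreal (c - a) * indicator {0..c} a \<partial>lborel)"
    by (intro nn_integral_cong) (auto split: split_indicator simp: ennreal_neg)
  also have "\<dots> = ennreal ((\<lambda>a. c * a - a\<^sup>2 / 2) c - (\<lambda>a. c * a - a\<^sup>2 / 2) 0)"
    by (rule nn_integral_FTC_Icc[where F="\<lambda>a. c * a - a\<^sup>2 / 2"])
       (auto intro!: derivative_eq_intros simp: True)
  also have "\<dots> = ennreal ((max 0 c)\<^sup>2 / 2)" using True by (simp add: power2_eq_square)
  finally show ?thesis .
next
  case False
  have "(\<lambda>a. indicator {0..} a * ennreal (max 0 (c - a))) = (\<lambda>a::real. 0)"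
    using False by (auto split: split_indicator simp: ennreal_neg)
  then show ?thesis using False by simp
qed

definition "E1 = (\<integral>\<^sup>+z. \<integral>\<^sup>+y. ennreal (f z) * ennreal (f y) * ennreal (max 0 (z - y)) \<partial>lborel \<partial>lborel)"
definition "E2 = (\<integral>\<^sup>+z. \<integral>\<^sup>+y. ennreal (f z) * ennreal (f y) * ennreal ((max 0 (z - y))\<^sup>2) \<partial>lborel \<partial>lborel)"
definition "Aq = (\<integral>\<^sup>+a. indicator {0..} a * Gn a \<partial>lborel)"
definition "Bq = (\<integral>\<^sup>+a. indicator {0..} a * (\<integral>\<^sup>+b. indicator {0..} b * Gn (a + b) \<partial>lborel) \<partial>lborel)"

lemma inner0: "(\<integral>\<^sup>+b. indicator {0..} b * indicator {..z - b} y \<partial>lborel) = ennreal (z - y)"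
  using inner1[of z 0 y] by simp

lemma two_half: "2 * ennreal (t / 2) = ennreal t"
proof (cases "0 \<le> t")
  case True
  have "ennreal (2 * (t / 2)) = ennreal 2 * ennreal (t / 2)" by (rule ennreal_mult) (use True in simp_all)
  then show ?thesis by simp
qed (simp add: ennreal_neg)

lemma tri2: "(\<integral>\<^sup>+a. indicator {0..} a * ennreal (c - a) \<partial>lborel) = ennreal ((max 0 c)\<^sup>2 / 2)"
  using tri[of c] by simp

lemma Gn_meas[measurable]: "Gn \<in> borel_measurable borel"
  unfolding Gn_def[abs_def] by measurable

lemma Aq_E1: "Aq = E1"
  unfolding Aq_def E1_def using layer[of "indicator {0..}" 0] by (simp add: inner0)

lemma Bq_E2: "2 * Bq = E2"
proof -
  have "Bq = (\<integral>\<^sup>+a. indicator {0..} a * (\<integral>\<^sup>+z. \<integral>\<^sup>+y. ennreal (f z) * ennreal (f y) * ennreal (max 0 (z - y - a)) \<partial>lborel \<partial>lborel) \<partial>lborel)"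
    unfolding Bq_def by (intro nn_integral_cong) (simp add: layer inner1)
  also have "\<dots> = (\<integral>\<^sup>+z. \<integral>\<^sup>+y. ennreal (f z) * ennreal (f y) * ennreal ((max 0 (z - y))\<^sup>2 / 2) \<partial>lborel \<partial>lborel)"
    using swap3[of "indicator {0..}" "\<lambda>c. ennreal (max 0 c)"] by (simp add: tri2)
  finally have "2 * Bq = (\<integral>\<^sup>+z. \<integral>\<^sup>+y. 2 * (ennreal (f z) * ennreal (f y) * ennreal ((max 0 (z - y))\<^sup>2 / 2)) \<partial>lborel \<partial>lborel)"
    by (simp add: nn_integral_cmult)
  also have "\<dots> = E2"
    unfolding E2_def by (intro nn_integral_cong) (simp add: two_half mult_ac)
  finally show ?thesis .
qed

lemma G_nbu2: "0 \<le> a \<Longrightarrow> 0 \<le> b \<Longrightarrow> G (a + b) \<le> 2 * G a * G b"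
proof -
  assume a: "0 \<le> a" and b: "0 \<le> b"
  have "G (a + b) = 1 * G (a + b)" by simp
  also have "\<dots> \<le> (2 * G 0) * G (a + b)" by (rule mult_right_mono[OF G0 G_nonneg])
  also have "\<dots> = 2 * (G 0 * G (a + b))" by simp
  also have "\<dots> \<le> 2 * (G a * G b)" using G_nbu[OF a b] by simp
  finally show ?thesis by simp
qed

lemma Bq_le: "Bq \<le> 2 * Aq * Aq"
proof -
  have "Bq \<le> (\<integral>\<^sup>+a. indicator {0..} a * (\<integral>\<^sup>+b. indicator {0..} b * (2 * Gn a * Gn b) \<partial>lborel) \<partial>lborel)"
    unfolding Bq_def
  proof (intro nn_integral_mono)
    fix a :: real
    show "indicator {0..} a * (\<integral>\<^sup>+b. indicator {0..} b * Gn (a + b) \<partial>lborel)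
        \<le> indicator {0..} a * (\<integral>\<^sup>+b. indicator {0..} b * (2 * Gn a * Gn b) \<partial>lborel)"
    proof (cases "0 \<le> a")
      case True
      have "(\<integral>\<^sup>+b. indicator {0..} b * Gn (a + b) \<partial>lborel) \<le> (\<integral>\<^sup>+b. indicator {0..} b * (2 * Gn a * Gn b) \<partial>lborel)"
      proof (intro nn_integral_mono)
        fix b :: real
        show "indicator {0..} b * Gn (a + b) \<le> indicator {0..} b * (2 * Gn a * Gn b)"
        proof (cases "0 \<le> b")
          case b: True
          have e: "2 * ennreal (G a) * ennreal (G b) = ennreal (2 * G a * G b)"
            using G_nonneg[of a] G_nonneg[of b] by (simp add: ennreal_mult)
          have "Gn (a + b) \<le> 2 * Gn a * Gn b"
            unfolding G_Gn[symmetric] e using G_nbu2[OF True b] by (simp add: ennreal_leI)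
          then show ?thesis by (intro mult_left_mono) auto
        qed simp
      qed
      then show ?thesis by (rule mult_left_mono) simp
    qed simp
  qed
  also have "\<dots> = (\<integral>\<^sup>+a. (indicator {0..} a * Gn a) * (2 * Aq) \<partial>lborel)"
  proof (intro nn_integral_cong)
    fix a
    have "(\<integral>\<^sup>+b. indicator {0..} b * (2 * Gn a * Gn b) \<partial>lborel) = (\<integral>\<^sup>+b. (2 * Gn a) * (indicator {0..} b * Gn b) \<partial>lborel)"
      by (intro nn_integral_cong) (simp add: mult_ac)
    also have "\<dots> = (2 * Gn a) * Aq" unfolding Aq_def by (rule nn_integral_cmult) measurable
    finally show "indicator {0..} a * (\<integral>\<^sup>+b. indicator {0..} b * (2 * Gn a * Gn b) \<partial>lborel) = (indicator {0..} a * Gn a) * (2 * Aq)"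
      by (simp add: mult_ac)
  qed
  also have "\<dots> = (\<integral>\<^sup>+a. indicator {0..} a * Gn a \<partial>lborel) * (2 * Aq)" by (rule nn_integral_multc) measurable
  also have "\<dots> = 2 * Aq * Aq" unfolding Aq_def by (simp add: mult_ac)
  finally show ?thesis .
qed

end

context lcd begin

lemma swap_nn:
  fixes \<phi> :: "real \<Rightarrow> ennreal"
  assumes [measurable]: "\<phi> \<in> borel_measurable borel"
  shows "(\<integral>\<^sup>+z. \<integral>\<^sup>+y. ennreal (f z) * ennreal (f y) * \<phi> (y - z) \<partial>lborel \<partial>lborel)
       = (\<integral>\<^sup>+z. \<integral>\<^sup>+y. ennreal (f z) * ennreal (f y) * \<phi> (z - y) \<partial>lborel \<partial>lborel)"
proof -
  have "(\<integral>\<^sup>+z. \<integral>\<^sup>+y. ennreal (f z) * ennreal (f y) * \<phi> (y - z) \<partial>lborel \<partial>lborel)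
      = (\<integral>\<^sup>+y. \<integral>\<^sup>+z. ennreal (f z) * ennreal (f y) * \<phi> (y - z) \<partial>lborel \<partial>lborel)"
    by (rule lborel_pair.Fubini'[symmetric]) measurable
  also have "\<dots> = (\<integral>\<^sup>+z. \<integral>\<^sup>+y. ennreal (f z) * ennreal (f y) * \<phi> (z - y) \<partial>lborel \<partial>lborel)"
    by (simp add: mult.commute)
  finally show ?thesis .
qed

lemma sym_split:
  fixes \<phi> :: "real \<Rightarrow> ennreal"
  assumes [measurable]: "\<phi> \<in> borel_measurable borel"
  shows "(\<integral>\<^sup>+z. \<integral>\<^sup>+y. ennreal (f z) * ennreal (f y) * (\<phi> (z - y) + \<phi> (y - z)) \<partial>lborel \<partial>lborel)
       = 2 * (\<integral>\<^sup>+z. \<integral>\<^sup>+y. ennreal (f z) * ennreal (f y) * \<phi> (z - y) \<partial>lborel \<partial>lborel)"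
proof -
  have "(\<integral>\<^sup>+z. \<integral>\<^sup>+y. ennreal (f z) * ennreal (f y) * (\<phi> (z - y) + \<phi> (y - z)) \<partial>lborel \<partial>lborel)
      = (\<integral>\<^sup>+z. (\<integral>\<^sup>+y. ennreal (f z) * ennreal (f y) * \<phi> (z - y) \<partial>lborel) + (\<integral>\<^sup>+y. ennreal (f z) * ennreal (f y) * \<phi> (y - z) \<partial>lborel) \<partial>lborel)"
    by (intro nn_integral_cong) (simp add: distrib_left nn_integral_add)
  also have "\<dots> = (\<integral>\<^sup>+z. \<integral>\<^sup>+y. ennreal (f z) * ennreal (f y) * \<phi> (z - y) \<partial>lborel \<partial>lborel)
      + (\<integral>\<^sup>+z. \<integral>\<^sup>+y. ennreal (f z) * ennreal (f y) * \<phi> (y - z) \<partial>lborel \<partial>lborel)"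
    by (rule nn_integral_add) measurable
  also have "\<dots> = 2 * (\<integral>\<^sup>+z. \<integral>\<^sup>+y. ennreal (f z) * ennreal (f y) * \<phi> (z - y) \<partial>lborel \<partial>lborel)"
    unfolding swap_nn[OF assms] by (simp add: mult_2)
  finally show ?thesis .
qed

lemma E_ineq: "E2 \<le> 4 * E1 * E1"
proof -
  have "E2 = 2 * Bq" using Bq_E2 by simp
  also have "\<dots> \<le> 2 * (2 * Aq * Aq)" using Bq_le by (intro mult_left_mono) auto
  also have "\<dots> = 4 * E1 * E1" unfolding Aq_E1 by (simp add: mult_ac)
  finally show ?thesis .
qed

end

theorem proposition6:
  fixes M :: "'a measure" and X X' :: "'a \<Rightarrow> real" and f :: "real \<Rightarrow> real"
  assumes "prob_space M"
    and f_nonneg: "\<And>x. 0 \<le> f x"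
    and distX: "distributed M lborel X (\<lambda>x. ennreal (f x))"
    and nondeg: "\<not> (\<exists>c. AE \<omega> in M. X \<omega> = c)"
    and second_moment: "integrable M (\<lambda>\<omega>. (X \<omega>)\<^sup>2)"
    and distX': "distributed M lborel X' (\<lambda>x. ennreal (f x))"
    and indep: "prob_space.indep_var M borel X borel X'"
    and lc: "log_concave f"
  shows "let F = (\<lambda>x. measure M {\<omega> \<in> space M. X \<omega> \<le> x});
             S = (\<lambda>x. 1 - F x);
             h = (\<lambda>x. f x / S x);
             r = (\<lambda>x. f x / F x);
             SD = sqrt (1/2 * (\<integral>\<omega>. (X \<omega> - X' \<omega>)\<^sup>2 \<partial>M));
             GMD = (\<integral>\<omega>. \<bar>X \<omega> - X' \<omega>\<bar> \<partial>M)
         in log_concave F \<and> log_concave S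
            \<and> mono_on {x. 0 < S x} h \<and> antimono_on {x. 0 < F x} r
            \<and> SD \<le> GMD"
proof -
  interpret P: prob_space M by fact
  have fmeasL: "(\<lambda>x. ennreal (f x)) \<in> borel_measurable lborel"
    using distributed_borel_measurable[OF distX] .
  have fmeas[measurable]: "f \<in> borel_measurable borel"
    using fmeasL f_nonneg by simp
  have Xm[measurable]: "X \<in> measurable M borel"
    using distributed_measurable[OF distX] by simp
  have X'm[measurable]: "X' \<in> measurable M borel"
    using distributed_measurable[OF distX'] by simp
  define N where "N = density lborel (\<lambda>x. ennreal (f x))"
  have dX: "distr M lborel X = N" unfolding N_def using distributed_distr_eq_density[OF distX] .
  have dX': "distr M lborel X' = N" unfolding N_def using distributed_distr_eq_density[OF distX'] .
  have "emeasure (distr M lborel X) UNIV = 1"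
    by (subst emeasure_distr) (auto simp: P.emeasure_space_1)
  then have nn1: "(\<integral>\<^sup>+x. ennreal (f x) \<partial>lborel) = 1"
    unfolding dX N_def by (subst (asm) emeasure_density) auto
  have fint: "integrable lborel f"
    unfolding integrable_iff_bounded using f_nonneg nn1 by simp
  have "ennreal (\<integral>x. f x \<partial>lborel) = 1"
    using nn_integral_eq_integral[OF fint] f_nonneg nn1 by simp
  then have fone: "(\<integral>x. f x \<partial>lborel) = 1" by simp
  interpret L: lcd f
    by unfold_locales (use f_nonneg fmeas fint fone lc in auto)
  have Feq: "measure M {\<omega> \<in> space M. X \<omega> \<le> x} = L.Fc x" for x
  proof -
    have "measure M {\<omega> \<in> space M. X \<omega> \<le> x} = measure M (X -` {..x} \<inter> space M)"
      by (intro arg_cong[where f="measure M"]) auto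
    also have "\<dots> = measure (distr M lborel X) {..x}"
      by (rule measure_distr[symmetric]) auto
    also have "\<dots> = L.Fc x" unfolding dX N_def L.Fc_def by (rule L.measure_N) simp
    finally show ?thesis .
  qed
  have Fe: "(\<lambda>x. measure M {\<omega> \<in> space M. X \<omega> \<le> x}) = L.Fc" using Feq by auto
  have Se: "(\<lambda>x. 1 - L.Fc x) = L.Sc" using L.Fc_Sc by auto
  have hmono: "mono_on {x. 0 < L.Sc x} (\<lambda>x. f x / L.Sc x)"
  proof (rule mono_onI)
    fix x y assume x: "x \<in> {x. 0 < L.Sc x}" and y: "y \<in> {x. 0 < L.Sc x}" and xy: "x \<le> y"
    then show "f x / L.Sc x \<le> f y / L.Sc y"
      using L.h_mono[OF xy] by (simp add: field_simps)
  qed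
  have ranti: "antimono_on {x. 0 < L.Fc x} (\<lambda>x. f x / L.Fc x)"
  proof (rule monotone_onI)
    fix x y assume x: "x \<in> {x. 0 < L.Fc x}" and y: "y \<in> {x. 0 < L.Fc x}" and xy: "x \<le> y"
    then show "f y / L.Fc y \<le> f x / L.Fc x"
      using L.r_anti[OF xy] by (simp add: field_simps)
  qed
  have dXb: "distr M borel X = N" unfolding dX[symmetric] by (rule distr_cong) auto
  have dX'b: "distr M borel X' = N" unfolding dX'[symmetric] by (rule distr_cong) auto
  have joint: "distr M (borel \<Otimes>\<^sub>M borel) (\<lambda>\<omega>. (X \<omega>, X' \<omega>)) = N \<Otimes>\<^sub>M N"
    using indep unfolding P.indep_var_distribution_eq dXb dX'b by simp
  interpret NP: prob_space N unfolding dX[symmetric] by (rule P.prob_space_distr) simp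
  have setsN: "sets N = sets borel" unfolding N_def by simp
  have pushf: "(\<integral>\<^sup>+\<omega>. g (X \<omega>, X' \<omega>) \<partial>M)
      = (\<integral>\<^sup>+z. \<integral>\<^sup>+y. ennreal (f z) * ennreal (f y) * g (z, y) \<partial>lborel \<partial>lborel)"
    if g[measurable]: "g \<in> borel_measurable (borel \<Otimes>\<^sub>M borel)" for g
  proof -
    have gN: "g \<in> borel_measurable (N \<Otimes>\<^sub>M N)"
      using g by (simp add: measurable_cong_sets[OF sets_pair_measure_cong[OF setsN setsN] refl])
    have "(\<integral>\<^sup>+\<omega>. g (X \<omega>, X' \<omega>) \<partial>M) = (\<integral>\<^sup>+p. g p \<partial>distr M (borel \<Otimes>\<^sub>M borel) (\<lambda>\<omega>. (X \<omega>, X' \<omega>)))"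
      by (rule nn_integral_distr[symmetric]) auto
    also have "\<dots> = (\<integral>\<^sup>+p. g p \<partial>(N \<Otimes>\<^sub>M N))" unfolding joint ..
    also have "\<dots> = (\<integral>\<^sup>+z. \<integral>\<^sup>+y. g (z, y) \<partial>N \<partial>N)"
      by (rule NP.nn_integral_fst[symmetric]) (rule gN)
    also have "\<dots> = (\<integral>\<^sup>+z. \<integral>\<^sup>+y. ennreal (f y) * g (z, y) \<partial>lborel \<partial>N)"
      by (intro nn_integral_cong) (simp add: N_def nn_integral_density)
    also have "\<dots> = (\<integral>\<^sup>+z. ennreal (f z) * (\<integral>\<^sup>+y. ennreal (f y) * g (z, y) \<partial>lborel) \<partial>lborel)"
      unfolding N_def by (rule nn_integral_density) measurable
    also have "\<dots> = (\<integral>\<^sup>+z. \<integral>\<^sup>+y. ennreal (f z) * ennreal (f y) * g (z, y) \<partial>lborel \<partial>lborel)"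
      by (intro nn_integral_cong) (simp add: nn_integral_cmult[symmetric] mult.assoc)
    finally show ?thesis .
  qed
  have nnA: "(\<integral>\<^sup>+\<omega>. ennreal \<bar>X \<omega> - X' \<omega>\<bar> \<partial>M) = 2 * L.E1"
  proof -
    have "(\<integral>\<^sup>+\<omega>. ennreal \<bar>X \<omega> - X' \<omega>\<bar> \<partial>M)
        = (\<integral>\<^sup>+z. \<integral>\<^sup>+y. ennreal (f z) * ennreal (f y) * ennreal \<bar>z - y\<bar> \<partial>lborel \<partial>lborel)"
      using pushf[of "\<lambda>p. ennreal \<bar>fst p - snd p\<bar>"] by simp
    also have "\<dots> = (\<integral>\<^sup>+z. \<integral>\<^sup>+y. ennreal (f z) * ennreal (f y) *
        ((\<lambda>c. ennreal (max 0 c)) (z - y) + (\<lambda>c. ennreal (max 0 c)) (y - z)) \<partial>lborel \<partial>lborel)"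
    proof (intro nn_integral_cong)
      fix z y :: real
      have e: "\<bar>z - y\<bar> = max 0 (z - y) + max 0 (y - z)" by (simp add: max_def abs_if)
      have "ennreal \<bar>z - y\<bar> = ennreal (max 0 (z - y)) + ennreal (max 0 (y - z))"
        unfolding e by (rule ennreal_plus) simp_all
      then show "ennreal (f z) * ennreal (f y) * ennreal \<bar>z - y\<bar> = ennreal (f z) * ennreal (f y) *
        ((\<lambda>c. ennreal (max 0 c)) (z - y) + (\<lambda>c. ennreal (max 0 c)) (y - z))" by (simp only:)
    qed
    also have "\<dots> = 2 * L.E1"
      unfolding L.E1_def by (rule L.sym_split) measurable
    finally show ?thesis .
  qed
  have nnB: "(\<integral>\<^sup>+\<omega>. ennreal ((X \<omega> - X' \<omega>)\<^sup>2) \<partial>M) = 2 * L.E2"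
  proof -
    have "(\<integral>\<^sup>+\<omega>. ennreal ((X \<omega> - X' \<omega>)\<^sup>2) \<partial>M)
        = (\<integral>\<^sup>+z. \<integral>\<^sup>+y. ennreal (f z) * ennreal (f y) * ennreal ((z - y)\<^sup>2) \<partial>lborel \<partial>lborel)"
      using pushf[of "\<lambda>p. ennreal ((fst p - snd p)\<^sup>2)"] by simp
    also have "\<dots> = (\<integral>\<^sup>+z. \<integral>\<^sup>+y. ennreal (f z) * ennreal (f y) *
        ((\<lambda>c. ennreal ((max 0 c)\<^sup>2)) (z - y) + (\<lambda>c. ennreal ((max 0 c)\<^sup>2)) (y - z)) \<partial>lborel \<partial>lborel)"
    proof (intro nn_integral_cong)
      fix z y :: real
      have e: "(z - y)\<^sup>2 = (max 0 (z - y))\<^sup>2 + (max 0 (y - z))\<^sup>2"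
      proof (cases "z \<le> y")
        case True
        then have "max 0 (z - y) = 0" "max 0 (y - z) = y - z" by auto
        then show ?thesis by (simp add: power2_commute)
      next
        case False
        then have "max 0 (z - y) = z - y" "max 0 (y - z) = 0" by auto
        then show ?thesis by simp
      qed
      have "ennreal ((z - y)\<^sup>2) = ennreal ((max 0 (z - y))\<^sup>2) + ennreal ((max 0 (y - z))\<^sup>2)"
        unfolding e by (rule ennreal_plus) simp_all
      then show "ennreal (f z) * ennreal (f y) * ennreal ((z - y)\<^sup>2) = ennreal (f z) * ennreal (f y) *
        ((\<lambda>c. ennreal ((max 0 c)\<^sup>2)) (z - y) + (\<lambda>c. ennreal ((max 0 c)\<^sup>2)) (y - z))"
        by (simp only:)
    qed
    also have "\<dots> = 2 * L.E2"
      unfolding L.E2_def by (rule L.sym_split) measurable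
    finally show ?thesis .
  qed
  have sdgmd: "sqrt (1/2 * (\<integral>\<omega>. (X \<omega> - X' \<omega>)\<^sup>2 \<partial>M)) \<le> (\<integral>\<omega>. \<bar>X \<omega> - X' \<omega>\<bar> \<partial>M)"
  proof (cases "integrable M (\<lambda>\<omega>. (X \<omega> - X' \<omega>)\<^sup>2)")
    case False
    then show ?thesis by (simp add: not_integrable_integral_eq)
  next
    case True
    have iD: "integrable M (\<lambda>\<omega>. X \<omega> - X' \<omega>)"
      by (rule P.square_integrable_imp_integrable[OF _ True]) simp
    then have iA: "integrable M (\<lambda>\<omega>. \<bar>X \<omega> - X' \<omega>\<bar>)" by simp
    define GMD where "GMD = (\<integral>\<omega>. \<bar>X \<omega> - X' \<omega>\<bar> \<partial>M)"
    define V where "V = (\<integral>\<omega>. (X \<omega> - X' \<omega>)\<^sup>2 \<partial>M)"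
    have G0: "0 \<le> GMD" unfolding GMD_def by simp
    have V0: "0 \<le> V" unfolding V_def by simp
    have eA: "ennreal GMD = 2 * L.E1"
      unfolding GMD_def nnA[symmetric] by (rule nn_integral_eq_integral[symmetric, OF iA]) simp
    have eB: "ennreal V = 2 * L.E2"
      unfolding V_def nnB[symmetric] by (rule nn_integral_eq_integral[symmetric, OF True]) simp
    have "ennreal V \<le> 2 * (4 * L.E1 * L.E1)" unfolding eB using L.E_ineq by (intro mult_left_mono) auto
    also have "\<dots> = 2 * (ennreal GMD * ennreal GMD)" unfolding eA by (simp add: mult_ac)
    also have "\<dots> = ennreal (2 * GMD * GMD)" using G0 by (simp add: ennreal_mult mult_ac)
    finally have "V \<le> 2 * GMD * GMD" using G0 by (subst (asm) ennreal_le_iff) auto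
    then have "1/2 * V \<le> GMD\<^sup>2" by (simp add: power2_eq_square)
    then have "sqrt (1/2 * V) \<le> sqrt (GMD\<^sup>2)" by (rule real_sqrt_le_mono)
    then show ?thesis using G0 unfolding V_def GMD_def by simp
  qed
  show ?thesis
    unfolding Let_def Fe using L.Fc_lc L.Sc_lc[folded Se] hmono[folded Se] ranti sdgmd by simp
qed

end
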